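(* Let $(D(t),\,t\ge0)$ be a random nonnegative demand process (with locally integrable paths), let the initial energy configuration be given, and let $T\in(0,\infty]$. The GGDDF policy is non-anticipatory: its rates at each time $t$ depend only on $D(t)$ and on the current stored energies $(E_i(t),\,i\in\mathcal S)$. Moreover, for every discharge-only policy $\pi$ that is non-anticipatory (its rates at time $t$ depend only on $(D(s),\,s\le t)$), the unserved energy $U_{\mathrm{GGDDF}}$ over $[0,T]$ under GGDDF satisfies $U_{\mathrm{GGDDF}}\le U_\pi$ almost surely; consequently GGDDF minimises the expectation of the unserved energy over $[0,T]$ and, for every $q\in(0,1)$, the $q$-quantile of its distribution, among all such policies.
   Context: A finite set $\mathcal S$ of energy stores is given. Store $i\in\mathcal S$ has capacity $\overline E_i>0$ and maximum discharge rate $P_i>0$. A (discharge-only) policy is a choice of measurable rate functions $(r_i(t),\,t\ge0)$, $i\in\mathcal S$, with stored energies $E_i(t)=E_i(0)-\int_0^t r_i(u)\,du$, subject to $0\le E_i(t)\le\overline E_i$, $0\le r_i(t)\le P_i$ and $\sum_{i\in\mathcal S}r_i(t)\le d(t)$ for all $t\ge0$, where $(d(t),\,t\ge0)$ is a nonnegative demand function. The unserved energy over $[0,T]$ is $\int_0^T\max\bigl(d(t)-\sum_{i}r_i(t),0\bigr)dt$. GGDDF (greedy greatest-discharge-duration-first) policy: at (almost) every time $t$, the total served rate is $\bar d(t)=\min\bigl(d(t),\sum_{i:E_i(t)>0}P_i\bigr)$, and it is allocated as follows: the nonempty stores are partitioned into groups $G_1,G_2,\dots$ of equal discharge-duration $E_i(t)/P_i$,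 listed in strictly decreasing order of that duration; letting $m$ be the least index with $\sum_{k\le m}\sum_{i\in G_k}P_i\ge\bar d(t)$, every store in $G_k$ with $k<m$ discharges at rate $P_i$, every store $i\in G_m$ discharges at rate $\lambda P_i$ with $\lambda\in(0,1]$ chosen so that $\sum_i r_i(t)=\bar d(t)$, and all other stores have rate $0$ (all rates are $0$ if $\bar d(t)=0$). *)

theory Defs
  imports "HOL-Probability.Probability"
begin

definition energy :: "('s \<Rightarrow> real) \<Rightarrow> ('s \<Rightarrow> real \<Rightarrow> real) \<Rightarrow> 's \<Rightarrow> real \<Rightarrow> real" where
  "energy E0 r i t = E0 i - (LINT u:{0..t}|lborel. r i u)"

definition is_policy :: "'s set \<Rightarrow> ('s \<Rightarrow> real) \<Rightarrow> ('s \<Rightarrow> real) \<Rightarrow> ('s \<Rightarrow> real)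
    \<Rightarrow> (real \<Rightarrow> real) \<Rightarrow> ('s \<Rightarrow> real \<Rightarrow> real) \<Rightarrow> bool" where
  "is_policy S Ebar P E0 d r \<longleftrightarrow>
     (\<forall>i\<in>S. set_borel_measurable lborel {0..} (r i)) \<and>
     (\<forall>t\<ge>0. (\<forall>i\<in>S. 0 \<le> energy E0 r i t \<and> energy E0 r i t \<le> Ebar i
                    \<and> 0 \<le> r i t \<and> r i t \<le> P i)
            \<and> (\<Sum>i\<in>S. r i t) \<le> d t)"

definition unserved :: "'s set \<Rightarrow> (real \<Rightarrow> real) \<Rightarrow> ('s \<Rightarrow> real \<Rightarrow> real) \<Rightarrow> ereal \<Rightarrow> ennreal" where
  "unserved S d r T =
     (\<integral>\<^sup>+ t\<in>{t. 0 \<le> t \<and> ereal t \<le> T}. ennreal (max (d t - (\<Sum>i\<in>S. r i t)) 0) \<partial>lborel)"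

text \<open>The nonempty stores N are grouped by equal duration e i / P i; the groups in decreasing
  order of duration; the cumulative capacity through the group of duration tau is the sum of
  P i over nonempty stores of duration >= tau; the least index m with cumulative capacity
  >= dbar corresponds to the greatest such duration tau.\<close>
definition ggddf_rates :: "'s set \<Rightarrow> ('s \<Rightarrow> real) \<Rightarrow> real \<Rightarrow> ('s \<Rightarrow> real) \<Rightarrow> ('s \<Rightarrow> real) \<Rightarrow> bool" where
  "ggddf_rates S P x e \<rho> \<longleftrightarrow>
    (let N = {i\<in>S. 0 < e i};
         dbar = min x (\<Sum>i\<in>N. P i);
         dur = (\<lambda>i. e i / P i)
     in if dbar = 0 then (\<forall>i\<in>S. \<rho> i = 0)
        else (let \<tau> = Max {\<tau> \<in> dur ` N. dbar \<le> (\<Sum>i\<in>{j\<in>N. \<tau> \<le> dur j}. P i)}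
              in \<exists>lam. 0 < lam \<and> lam \<le> 1 \<and>
                   (\<forall>i\<in>S. \<rho> i = (if i \<in> N \<and> \<tau> < dur i then P i
                                  else if i \<in> N \<and> dur i = \<tau> then lam * P i else 0)) \<and>
                   (\<Sum>i\<in>S. \<rho> i) = dbar))"

definition ggddf :: "'s set \<Rightarrow> ('s \<Rightarrow> real) \<Rightarrow> ('s \<Rightarrow> real) \<Rightarrow> (real \<Rightarrow> real) \<Rightarrow> ('s \<Rightarrow> real \<Rightarrow> real) \<Rightarrow> bool" where
  "ggddf S P E0 d r \<longleftrightarrow>
     (AE t in lborel. 0 \<le> t \<longrightarrow> ggddf_rates S P (d t) (\<lambda>i. energy E0 r i t) (\<lambda>i. r i t))"

definition nonanticipatory :: "'w measure \<Rightarrow> ('w \<Rightarrow> real \<Rightarrow> real) \<Rightarrow> ('w \<Rightarrow> 's \<Rightarrow> real \<Rightarrow> real) \<Rightarrow> 's set \<Rightarrow> bool" where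
  "nonanticipatory M D \<pi> S \<longleftrightarrow>
     (\<forall>t\<ge>0. \<forall>\<omega>\<in>space M. \<forall>\<omega>'\<in>space M. (\<forall>s\<in>{0..t}. D \<omega> s = D \<omega>' s) \<longrightarrow> (\<forall>i\<in>S. \<pi> \<omega> i t = \<pi> \<omega>' i t))"

definition quantile :: "'w measure \<Rightarrow> ('w \<Rightarrow> ennreal) \<Rightarrow> real \<Rightarrow> ennreal" where
  "quantile M X q = Inf {x. q \<le> measure M {\<omega>\<in>space M. X \<omega> \<le> x}}"

end

theory Submission
  imports Defs
begin


lemma gg_cases:
  assumes "ggddf_rates S P x e \<rho>"
  obtains "\<forall>i\<in>S. \<rho> i = 0" "min x (\<Sum>i\<in>{i\<in>S. 0 < e i}. P i) = 0"
  | tau lam where "0 < lam" "lam \<le> 1"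
     "\<forall>i\<in>S. \<rho> i = (if i \<in> {i\<in>S. 0 < e i} \<and> tau < e i / P i then P i
              else if i \<in> {i\<in>S. 0 < e i} \<and> e i / P i = tau then lam * P i else 0)"
     "(\<Sum>i\<in>S. \<rho> i) = min x (\<Sum>i\<in>{i\<in>S. 0 < e i}. P i)"
     "min x (\<Sum>i\<in>{i\<in>S. 0 < e i}. P i) \<noteq> 0"
     "tau = Max {\<tau> \<in> (\<lambda>i. e i / P i) ` {i\<in>S. 0 < e i}. min x (\<Sum>i\<in>{i\<in>S. 0 < e i}. P i) \<le> (\<Sum>i\<in>{j\<in>{i\<in>S. 0 < e i}. \<tau> \<le> e j / P j}. P i)}"
proof -
  let ?N = "{i\<in>S. 0 < e i}"
  let ?db = "min x (\<Sum>i\<in>?N. P i)"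
  let ?tau = "Max {\<tau> \<in> (\<lambda>i. e i / P i) ` ?N. ?db \<le> (\<Sum>i\<in>{j\<in>?N. \<tau> \<le> e j / P j}. P i)}"
  have H: "if ?db = 0 then (\<forall>i\<in>S. \<rho> i = 0) else (\<exists>lam. 0 < lam \<and> lam \<le> 1 \<and>
     (\<forall>i\<in>S. \<rho> i = (if i \<in> ?N \<and> ?tau < e i / P i then P i
              else if i \<in> ?N \<and> e i / P i = ?tau then lam * P i else 0)) \<and> (\<Sum>i\<in>S. \<rho> i) = ?db)"
    using assms unfolding ggddf_rates_def Let_def .
  show thesis
  proof (cases "?db = 0")
    case True
    from H have "\<forall>i\<in>S. \<rho> i = 0" unfolding if_P[OF True] .
    then show ?thesis using True by (rule that(1))
  next
    case False
    from H have "\<exists>lam. 0 < lam \<and> lam \<le> 1 \<and>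
     (\<forall>i\<in>S. \<rho> i = (if i \<in> ?N \<and> ?tau < e i / P i then P i
              else if i \<in> ?N \<and> e i / P i = ?tau then lam * P i else 0)) \<and> (\<Sum>i\<in>S. \<rho> i) = ?db"
      unfolding if_not_P[OF False] .
    then obtain lam where L: "0 < lam" "lam \<le> 1" "\<forall>i\<in>S. \<rho> i = (if i \<in> ?N \<and> ?tau < e i / P i then P i
              else if i \<in> ?N \<and> e i / P i = ?tau then lam * P i else 0)" "(\<Sum>i\<in>S. \<rho> i) = ?db"
      by blast
    show ?thesis by (rule that(2)[OF L False refl])
  qed
qed

lemma gg_order:
  assumes g: "ggddf_rates S P x e \<rho>" and S: "\<forall>i\<in>S. 0 < P i" "\<forall>i\<in>S. 0 \<le> e i"
    and ik: "i \<in> S" "k \<in> S" and lt: "e k / P k < e i / P i"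
  shows "\<rho> k / P k \<le> \<rho> i / P i"
  using g
proof (cases rule: gg_cases)
  case 1 then show ?thesis using ik by simp
next
  case (2 tau lam)
  have Pi: "0 < P i" "0 < P k" using S ik by auto
  have "0 \<le> e k / P k" using S ik by auto
  hence ei: "0 < e i" using lt Pi by (smt (verit) divide_nonpos_pos)
  show ?thesis using 2(3) ik ei lt Pi 2(1,2) by auto
qed

lemma gg_zero:
  assumes g: "ggddf_rates S P x e \<rho>" and S: "\<forall>i\<in>S. 0 < P i"
    and ik: "i \<in> S" "k \<in> S" and ek: "0 < e k" and nk: "\<rho> k \<noteq> P k"
    and lt: "e i / P i < e k / P k"
  shows "\<rho> i = 0"
  using g
proof (cases rule: gg_cases)
  case 1 then show ?thesis using ik by simp
next
  case (2 tau lam)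
  have "\<not> tau < e k / P k" using 2(3) ik ek nk by auto
  then show ?thesis using 2(3) ik lt by auto
qed


lemma gg_met:
  assumes g: "ggddf_rates S P x e \<rho>" and fin: "finite S" and S: "\<forall>i\<in>S. 0 < P i"
    and k: "k \<in> S" and ek: "0 < e k" and nk: "\<rho> k \<noteq> P k" and x: "0 \<le> x"
  shows "(\<Sum>i\<in>S. \<rho> i) = x"
proof -
  let ?N = "{i\<in>S. 0 < e i}"
  have finN: "finite ?N" using fin by simp
  have kN: "k \<in> ?N" using k ek by simp
  have posN: "P k \<le> (\<Sum>i\<in>?N. P i)"
    using finN kN S by (intro member_le_sum) auto
  have Pk: "0 < P k" using S k by auto
  show ?thesis using g
  proof (cases rule: gg_cases)
    case 1
    then show ?thesis using posN Pk x fin by (simp add: min_def split: if_splits)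
  next
    case (2 tau lam)
    show ?thesis
    proof (cases "x \<le> (\<Sum>i\<in>?N. P i)")
      case True then show ?thesis using 2(4) by simp
    next
      case False
      hence db: "min x (\<Sum>i\<in>?N. P i) = (\<Sum>i\<in>?N. P i)" by simp
      let ?dur = "\<lambda>i. e i / P i"
      let ?Q = "{\<tau> \<in> ?dur ` ?N. min x (\<Sum>i\<in>?N. P i) \<le> (\<Sum>i\<in>{j\<in>?N. \<tau> \<le> ?dur j}. P i)}"
      have finQ: "finite ?Q" using finN by simp
      have mQ: "Min (?dur ` ?N) \<in> ?Q"
      proof -
        have "{j\<in>?N. Min (?dur ` ?N) \<le> ?dur j} = ?N" using finN by auto
        moreover have "Min (?dur ` ?N) \<in> ?dur ` ?N" using finN kN by (intro Min_in) auto
        ultimately show ?thesis using db by simp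
      qed
      have tQ: "tau \<in> ?Q" unfolding 2(6) using finQ mQ by (intro Max_in) auto
      hence le: "(\<Sum>i\<in>?N. P i) \<le> (\<Sum>i\<in>{j\<in>?N. tau \<le> ?dur j}. P i)" using db by simp
      have allN: "\<forall>j\<in>?N. tau \<le> ?dur j"
      proof (rule ccontr)
        assume "\<not> ?thesis"
        then obtain j where j: "j \<in> ?N" "\<not> tau \<le> ?dur j" by blast
        have "(\<Sum>i\<in>{j\<in>?N. tau \<le> ?dur j}. P i) < (\<Sum>i\<in>?N. P i)"
          using finN j S by (intro sum_strict_mono2[of ?N]) auto
        then show False using le by simp
      qed
      have tk: "tau \<le> ?dur k" using allN kN by blast
      have rk: "\<rho> k = (if k \<in> ?N \<and> tau < ?dur k then P k
              else if k \<in> ?N \<and> ?dur k = tau then lam * P k else 0)" using 2(3) k by blast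
      have dk: "?dur k = tau" using rk nk tk kN by (auto split: if_splits)
      have rk2: "\<rho> k = lam * P k" using rk dk kN by simp
      have "lam \<noteq> 1" using rk2 nk by auto
      hence lam1: "lam < 1" using 2(2) by simp
      have "(\<Sum>i\<in>S. \<rho> i) < (\<Sum>i\<in>S. if i \<in> ?N then P i else 0)"
      proof (rule sum_strict_mono_ex1[OF fin])
        show "\<forall>i\<in>S. \<rho> i \<le> (if i \<in> ?N then P i else 0)"
          using 2(3) 2(1) 2(2) S by (auto simp: mult_le_cancel_right1 less_imp_le)
        show "\<exists>a\<in>S. \<rho> a < (if a \<in> ?N then P a else 0)"
          using k kN rk2 lam1 Pk by (intro bexI[of _ k]) auto
      qed
      also have "\<dots> = (\<Sum>i\<in>?N. P i)" using fin by (simp add: sum.inter_filter)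
      finally show ?thesis using 2(4) db by simp
    qed
  qed
qed

lemma gg_unique:
  assumes g1: "ggddf_rates S P x e \<rho>1" and g2: "ggddf_rates S P x e \<rho>2"
    and fin: "finite S" and S: "\<forall>i\<in>S. 0 < P i" and i: "i \<in> S"
  shows "\<rho>1 i = \<rho>2 i"
  using g1
proof (cases rule: gg_cases)
  case 1
  note B = 1
  show ?thesis using g2
  proof (cases rule: gg_cases)
    case 1 then show ?thesis using B i by simp
  next
    case 2 then show ?thesis using B by simp
  qed
next
  case (2 tau lam)
  note A = 2
  show ?thesis using g2
  proof (cases rule: gg_cases)
    case 1 then show ?thesis using A by simp
  next
    case (2 tau2 lam2)
    have tt: "tau2 = tau" using A(6) 2(6) by simp
    let ?N = "{i\<in>S. 0 < e i}"
    let ?G = "{i\<in>S. \<not>(i \<in> ?N \<and> tau < e i / P i) \<and> (i \<in> ?N \<and> e i / P i = tau)}"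
    have diff: "\<forall>j\<in>S. \<rho>1 j - \<rho>2 j = (if j \<in> ?G then (lam - lam2) * P j else 0)"
      using A(3) 2(3) tt by (auto simp: algebra_simps)
    have "0 = (\<Sum>j\<in>S. \<rho>1 j - \<rho>2 j)" using A(4) 2(4) by (simp add: sum_subtractf)
    also have "\<dots> = (\<Sum>j\<in>S. if j \<in> ?G then (lam - lam2) * P j else 0)"
      using diff by (intro sum.cong) auto
    also have "\<dots> = (lam - lam2) * (\<Sum>j\<in>?G. P j)"
      using fin by (simp add: sum.If_cases sum_distrib_left Int_def) (intro sum.cong; auto)
    finally have z: "(lam - lam2) * (\<Sum>j\<in>?G. P j) = 0" by simp
    show ?thesis
    proof (cases "i \<in> ?G")
      case True
      have "0 < (\<Sum>j\<in>?G. P j)" using True fin S by (intro sum_pos2[of _ i]) auto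
      hence "lam = lam2" using z by simp
      then have "\<rho>1 i - \<rho>2 i = 0" using diff i by auto
      then show ?thesis by simp
    next
      case False then have "\<rho>1 i - \<rho>2 i = 0" using diff i by auto
      then show ?thesis by simp
    qed
  qed
qed



lemma pol_meas:
  assumes "is_policy S Ebar P E0 d r" "i \<in> S" "B \<in> sets lborel" "B \<subseteq> {0..}"
  shows "set_borel_measurable lborel B (r i)"
proof -
  have "set_borel_measurable lborel {0..} (r i)" using assms(1,2) unfolding is_policy_def by blast
  then show ?thesis using assms(3,4) by (rule set_borel_measurable_subset)
qed

lemma pol_int:
  assumes p: "is_policy S Ebar P E0 d r" and i: "i \<in> S" and B: "B \<in> sets lborel" "B \<subseteq> {0..t}"
  shows "set_integrable lborel B (r i)"
proof -
  have c: "set_integrable lborel {0..t} (\<lambda>_. P i)"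
  proof (cases "0 \<le> t")
    case True then show ?thesis unfolding set_integrable_def
      by (intro integrable_indicator) auto
  next
    case False then show ?thesis unfolding set_integrable_def by simp
  qed
  have "set_integrable lborel {0..t} (r i)"
  proof (rule set_integrable_bound[OF c])
    show "set_borel_measurable lborel {0..t} (r i)" using p i by (intro pol_meas) auto
    show "AE x in lborel. x \<in> {0..t} \<longrightarrow> norm (r i x) \<le> norm (P i)"
    proof (intro AE_I2 impI)
      fix x assume "x \<in> {0..t}"
      hence "0 \<le> r i x \<and> r i x \<le> P i" using p i unfolding is_policy_def by auto
      then show "norm (r i x) \<le> norm (P i)" by simp
    qed
  qed
  then show ?thesis using B by (rule set_integrable_subset)
qed

lemma energy_diff:
  assumes p: "is_policy S Ebar P E0 d r" and i: "i \<in> S" and ab: "0 \<le> a" "a \<le> b"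
  shows "energy E0 r i a - energy E0 r i b = (LINT u:{a<..b}|lborel. r i u)"
proof -
  have "{0..b} = {0..a} \<union> {a<..b}" using ab by auto
  hence "(LINT u:{0..b}|lborel. r i u) = (LINT u:{0..a}|lborel. r i u) + (LINT u:{a<..b}|lborel. r i u)"
  proof -
    have "(LINT u:{0..b}|lborel. r i u) = (LINT u:{0..a} \<union> {a<..b}|lborel. r i u)"
      using \<open>{0..b} = _\<close> by simp
    also have "\<dots> = (LINT u:{0..a}|lborel. r i u) + (LINT u:{a<..b}|lborel. r i u)"
      by (rule set_integral_Un) (use ab in \<open>auto intro!: pol_int[OF p i, of _ b]\<close>)
    finally show ?thesis .
  qed
  then show ?thesis unfolding energy_def by simp
qed

lemma pol_pt:
  assumes p: "is_policy S Ebar P E0 d r" and i: "i \<in> S" and t: "0 \<le> t"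
  shows "0 \<le> r i t" "r i t \<le> P i" "0 \<le> energy E0 r i t" "energy E0 r i t \<le> Ebar i"
    "(\<Sum>j\<in>S. r j t) \<le> d t"
  using assms unfolding is_policy_def by auto

lemma energy_lip:
  assumes p: "is_policy S Ebar P E0 d r" and i: "i \<in> S" and ab: "0 \<le> a" "a \<le> b"
  shows "0 \<le> energy E0 r i a - energy E0 r i b" "energy E0 r i a - energy E0 r i b \<le> P i * (b - a)"
proof -
  have I: "set_integrable lborel {a<..b} (r i)" using ab by (intro pol_int[OF p i, of _ b]) auto
  have C: "set_integrable lborel {a<..b} (\<lambda>_. P i)" unfolding set_integrable_def
    using ab by (intro integrable_indicator) auto
  have Z: "set_integrable lborel {a<..b} (\<lambda>_. 0::real)" unfolding set_integrable_def by simp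
  have "(LINT u:{a<..b}|lborel. (0::real)) \<le> (LINT u:{a<..b}|lborel. r i u)"
    using I Z pol_pt(1)[OF p i] ab by (intro set_integral_mono) auto
  then show "0 \<le> energy E0 r i a - energy E0 r i b" using energy_diff[OF p i ab]
    by (simp add: set_lebesgue_integral_def)
  have "(LINT u:{a<..b}|lborel. r i u) \<le> (LINT u:{a<..b}|lborel. P i)"
    using I C pol_pt(2)[OF p i] ab by (intro set_integral_mono) auto
  also have "\<dots> = P i * (b - a)" using ab by (simp add: set_integral_const)
  finally show "energy E0 r i a - energy E0 r i b \<le> P i * (b - a)" using energy_diff[OF p i ab] by simp
qed

lemma energy_cont:
  assumes p: "is_policy S Ebar P E0 d r" and i: "i \<in> S" and P: "0 \<le> P i"
  shows "continuous_on {0..} (energy E0 r i)"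
proof (rule lipschitz_on_continuous_on)
  show "lipschitz_on (P i) {0..} (energy E0 r i)"
    unfolding lipschitz_on_def
  proof (intro conjI ballI P)
    fix x y :: real assume xy: "x \<in> {0..}" "y \<in> {0..}"
    show "dist (energy E0 r i x) (energy E0 r i y) \<le> P i * dist x y"
    proof (cases "x \<le> y")
      case True then show ?thesis using energy_lip[OF p i, of x y] xy by (simp add: dist_real_def)
    next
      case False then show ?thesis using energy_lip[OF p i, of y x] xy by (simp add: dist_real_def)
    qed
  qed
qed



lemma gg_order_time:
  assumes p: "is_policy S Ebar P E0 d r" and g: "ggddf S P E0 d r"
    and Ppos: "\<forall>i\<in>S. 0 < P i" and ik: "i \<in> S" "k \<in> S" and uv: "0 \<le> u" "u \<le> v"
    and le: "energy E0 r k u / P k \<le> energy E0 r i u / P i"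
  shows "energy E0 r k v / P k \<le> energy E0 r i v / P i"
proof (rule ccontr)
  assume neg: "\<not> ?thesis"
  define f where "f t = energy E0 r i t / P i - energy E0 r k t / P k" for t
  have fv: "f v < 0" using neg unfolding f_def by simp
  have fu: "0 \<le> f u" using le unfolding f_def by simp
  have cont: "continuous_on {u..v} f" unfolding f_def
    using Ppos ik uv
    by (intro continuous_on_diff continuous_on_divide continuous_on_const
        continuous_on_subset[OF energy_cont[OF p]]) auto
  define A where "A = {u..v} \<inter> f -` {0..}"
  have clA: "closed A" unfolding A_def by (intro continuous_closed_preimage cont) auto
  have uA: "u \<in> A" unfolding A_def using fu uv by auto
  have bA: "bdd_above A" unfolding A_def by (intro bdd_aboveI[of _ v]) auto
  define w where "w = Sup A"
  have wA: "w \<in> A" unfolding w_def using clA uA bA by (intro closed_contains_Sup) auto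
  have fw: "0 \<le> f w" and wuv: "u \<le> w" "w \<le> v" using wA unfolding A_def by auto
  have wv: "w < v" using wuv fw fv by (cases "w = v") auto
  have after: "f x < 0" if "w < x" "x \<le> v" for x
  proof (rule ccontr)
    assume "\<not> f x < 0"
    hence "x \<in> A" unfolding A_def using that wuv by auto
    hence "x \<le> w" unfolding w_def using bA by (rule cSup_upper)
    then show False using that by simp
  qed
  have AEi: "AE x\<in>{w<..v} in lborel. r i x / P i \<le> r k x / P k"
    using g unfolding ggddf_def
  proof (rule AE_mp, intro AE_I2 impI)
    fix x assume H: "0 \<le> x \<longrightarrow> ggddf_rates S P (d x) (\<lambda>j. energy E0 r j x) (\<lambda>j. r j x)"
      and x: "x \<in> {w<..v}"
    have x0: "0 \<le> x" using x wuv uv by auto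
    have "f x < 0" using after x by auto
    hence lt: "energy E0 r i x / P i < energy E0 r k x / P k" unfolding f_def by simp
    show "r i x / P i \<le> r k x / P k"
      using H x0 Ppos ik lt pol_pt(3)[OF p _ x0]
      by (intro gg_order[where e="\<lambda>j. energy E0 r j x" and \<rho>="\<lambda>j. r j x" and x="d x" and S=S]) auto
  qed
  have Ii: "set_integrable lborel {w<..v} (r i)" and Ik: "set_integrable lborel {w<..v} (r k)"
    using ik wuv uv by (auto intro!: pol_int[OF p, of _ _ v])
  have "(LINT x:{w<..v}|lborel. r i x / P i) \<le> (LINT x:{w<..v}|lborel. r k x / P k)"
    using Ii Ik AEi by (intro set_integral_mono_AE) auto
  hence "(LINT x:{w<..v}|lborel. r i x) / P i \<le> (LINT x:{w<..v}|lborel. r k x) / P k" by simp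
  hence "(energy E0 r i w - energy E0 r i v) / P i \<le> (energy E0 r k w - energy E0 r k v) / P k"
    using energy_diff[OF p ik(1), of w v] energy_diff[OF p ik(2), of w v] wuv uv by simp
  hence "f w \<le> f v" unfolding f_def by (simp add: diff_divide_distrib)
  then show False using fw fv by simp
qed



lemma set_integral_sum_fin:
  fixes f :: "'i \<Rightarrow> 'a \<Rightarrow> real"
  assumes "\<And>i. i \<in> I \<Longrightarrow> set_integrable M A (f i)"
  shows "set_integrable M A (\<lambda>x. \<Sum>i\<in>I. f i x)"
    "(LINT x:A|M. (\<Sum>i\<in>I. f i x)) = (\<Sum>i\<in>I. LINT x:A|M. f i x)"
proof -
  have e: "(\<lambda>x. indicator A x *\<^sub>R (\<Sum>i\<in>I. f i x)) = (\<lambda>x. \<Sum>i\<in>I. indicator A x *\<^sub>R f i x)"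
    by (simp add: sum_distrib_left)
  show "set_integrable M A (\<lambda>x. \<Sum>i\<in>I. f i x)"
    using assms unfolding set_integrable_def e by (intro Bochner_Integration.integrable_sum) auto
  show "(LINT x:A|M. (\<Sum>i\<in>I. f i x)) = (\<Sum>i\<in>I. LINT x:A|M. f i x)"
    using assms unfolding set_integrable_def set_lebesgue_integral_def e by (intro Bochner_Integration.integral_sum) auto
qed

lemma energy_mono:
  assumes p: "is_policy S Ebar P E0 d r" and i: "i \<in> S" and ab: "0 \<le> a" "a \<le> b"
  shows "energy E0 r i b \<le> energy E0 r i a"
  using energy_lip(1)[OF p i ab] by simp

lemma main_energy:
  assumes fin: "finite S" and Ppos: "\<forall>i\<in>S. 0 < P i"
    and dpos: "\<forall>t\<ge>0. 0 \<le> d t"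
    and p: "is_policy S Ebar P E0 d r" and g: "ggddf S P E0 d r"
    and q: "is_policy S Ebar P E0 d \<pi>" and t: "0 \<le> t"
  shows "(\<Sum>i\<in>S. energy E0 r i t) \<le> (\<Sum>i\<in>S. energy E0 \<pi> i t)"
proof -
  define K where "K = {i\<in>S. 0 < energy E0 r i t}"
  have KS: "K \<subseteq> S" unfolding K_def by auto
  have finK: "finite K" using fin KS finite_subset by auto
  define rr where "rr i x = indicator {0..} x *\<^sub>R r i x" for i x
  have rrm: "rr i \<in> borel_measurable lborel" if "i \<in> S" for i
    using p that unfolding is_policy_def set_borel_measurable_def rr_def by blast
  define A0 where "A0 = {x\<in>space lborel. \<forall>i\<in>K. rr i x = P i}"
  have A0m: "A0 \<in> sets lborel" unfolding A0_def
  proof (rule sets.sets_Collect_finite_All[OF _ finK])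
    fix i assume "i \<in> K"
    hence "rr i -` {P i} \<inter> space lborel \<in> sets lborel" using KS by (intro measurable_sets[OF rrm]) auto
    moreover have "{x \<in> space lborel. rr i x = P i} = rr i -` {P i} \<inter> space lborel" by auto
    ultimately show "{x \<in> space lborel. rr i x = P i} \<in> sets lborel" by simp
  qed
  define A where "A = {0..t} \<inter> A0"
  define B where "B = {0..t} - A0"
  have Am: "A \<in> sets lborel" and Bm: "B \<in> sets lborel" unfolding A_def B_def using A0m by auto
  have AB: "A \<inter> B = {}" "A \<union> B = {0..t}" "A \<subseteq> {0..t}" "B \<subseteq> {0..t}"
    unfolding A_def B_def by auto
  have split: "(LINT x:{0..t}|lborel. f i x) = (LINT x:A|lborel. f i x) + (LINT x:B|lborel. f i x)"
    if "is_policy S Ebar P E0 d f" "i \<in> S" for f i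
  proof -
    have "(LINT x:{0..t}|lborel. f i x) = (LINT x:A \<union> B|lborel. f i x)" using AB by simp
    also have "\<dots> = (LINT x:A|lborel. f i x) + (LINT x:B|lborel. f i x)"
      using AB Am Bm by (intro set_integral_Un pol_int[OF that, of _ t]) auto
    finally show ?thesis .
  qed
  have intA: "set_integrable lborel A (f i)" and intB: "set_integrable lborel B (f i)"
    if "is_policy S Ebar P E0 d f" "i \<in> S" for f i
    using AB Am Bm by (auto intro!: pol_int[OF that, of _ t])
  have en: "energy E0 f i t = E0 i - (LINT x:{0..t}|lborel. f i x)" for f i
    unfolding energy_def ..
  have b: "(LINT x:A|lborel. \<pi> i x) \<le> (LINT x:A|lborel. r i x)" if i: "i \<in> K" for i
  proof (rule set_integral_mono[OF intA[OF q] intA[OF p]])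
    show "i \<in> S" "i \<in> S" using i KS by auto
    fix x assume x: "x \<in> A"
    hence x0: "0 \<le> x" and "rr i x = P i" using i unfolding A_def A0_def by auto
    hence "r i x = P i" unfolding rr_def by simp
    then show "\<pi> i x \<le> r i x" using pol_pt(2)[OF q _ x0] i KS by auto
  qed
  have c: "(LINT x:{0..t}|lborel. \<pi> i x) \<le> (LINT x:{0..t}|lborel. r i x)" if i: "i \<in> S - K" for i
  proof -
    have "energy E0 r i t = 0" using i pol_pt(3)[OF p _ t] unfolding K_def by force
    moreover have "0 \<le> energy E0 \<pi> i t" using i pol_pt(3)[OF q _ t] by auto
    ultimately show ?thesis unfolding en by simp
  qed
  \<comment> \<open>complementary slackness on B\<close>
  have Bpt: "\<exists>k\<in>K. r k x \<noteq> P k" if "x \<in> B" for x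
    using that unfolding B_def A0_def rr_def by auto
  have d: "(LINT x:B|lborel. r i x) = 0" if i: "i \<in> S - K" for i
  proof -
    have "AE x in lborel. indicator B x *\<^sub>R r i x = 0"
      using g unfolding ggddf_def
    proof (rule AE_mp, intro AE_I2 impI)
      fix x assume H: "0 \<le> x \<longrightarrow> ggddf_rates S P (d x) (\<lambda>j. energy E0 r j x) (\<lambda>j. r j x)"
      show "indicator B x *\<^sub>R r i x = 0"
      proof (cases "x \<in> B")
        case False then show ?thesis by simp
      next
        case True
        then obtain k where k: "k \<in> K" "r k x \<noteq> P k" using Bpt by blast
        have x: "0 \<le> x" "x \<le> t" using True AB by auto
        have kS: "k \<in> S" using k KS by auto
        have ekt: "0 < energy E0 r k t" using k unfolding K_def by auto
        have ekx: "0 < energy E0 r k x" using energy_mono[OF p kS x] ekt by simp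
        have eit: "energy E0 r i t = 0" using i pol_pt(3)[OF p _ t] unfolding K_def by force
        have lt: "energy E0 r i x / P i < energy E0 r k x / P k"
        proof (rule ccontr)
          assume "\<not> ?thesis"
          hence "energy E0 r k x / P k \<le> energy E0 r i x / P i" by simp
          hence "energy E0 r k t / P k \<le> energy E0 r i t / P i"
            using gg_order_time[OF p g Ppos _ kS x] i by auto
          then show False using eit ekt Ppos[rule_format, OF kS] by (simp add: divide_le_0_iff)
        qed
        have "r i x = 0"
          using H x Ppos i kS ekx k(2) lt
          by (intro gg_zero[where e="\<lambda>j. energy E0 r j x" and \<rho>="\<lambda>j. r j x" and x="d x" and S=S and k=k]) auto
        then show ?thesis by simp
      qed
    qed
    then show ?thesis unfolding set_lebesgue_integral_def by (rule integral_eq_zero_AE)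
  qed
  have e: "(LINT x:B|lborel. (\<Sum>i\<in>S. \<pi> i x)) \<le> (LINT x:B|lborel. (\<Sum>i\<in>S. r i x))"
  proof (rule set_integral_mono_AE)
    show "set_integrable lborel B (\<lambda>x. \<Sum>i\<in>S. \<pi> i x)" "set_integrable lborel B (\<lambda>x. \<Sum>i\<in>S. r i x)"
      by (auto intro!: set_integral_sum_fin intB[OF q] intB[OF p])
    show "AE x\<in>B in lborel. (\<Sum>i\<in>S. \<pi> i x) \<le> (\<Sum>i\<in>S. r i x)"
      using g unfolding ggddf_def
    proof (rule AE_mp, intro AE_I2 impI)
      fix x assume H: "0 \<le> x \<longrightarrow> ggddf_rates S P (d x) (\<lambda>j. energy E0 r j x) (\<lambda>j. r j x)"
        and xB: "x \<in> B"
      obtain k where k: "k \<in> K" "r k x \<noteq> P k" using Bpt xB by blast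
      have x: "0 \<le> x" "x \<le> t" using xB AB by auto
      have kS: "k \<in> S" using k KS by auto
      have ekt: "0 < energy E0 r k t" using k unfolding K_def by auto
      have ekx: "0 < energy E0 r k x" using energy_mono[OF p kS x] ekt by simp
      have "(\<Sum>i\<in>S. r i x) = d x"
        using H x Ppos kS ekx k(2) dpos fin
        by (intro gg_met[where e="\<lambda>j. energy E0 r j x" and \<rho>="\<lambda>j. r j x" and x="d x" and S=S and k=k]) auto
      then show "(\<Sum>i\<in>S. \<pi> i x) \<le> (\<Sum>i\<in>S. r i x)" using pol_pt(5)[OF q kS x(1)] by simp
    qed
  qed
  have Bnn: "0 \<le> (LINT x:B|lborel. \<pi> i x)" if "i \<in> S" for i
    unfolding set_lebesgue_integral_def
    using that AB pol_pt(1)[OF q] by (intro integral_nonneg_AE AE_I2) (auto simp: indicator_def)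
  let ?I = "\<lambda>f X i. LINT x:X|lborel. f i x"
  have "(\<Sum>i\<in>S. ?I \<pi> {0..t} i) = (\<Sum>i\<in>S-K. ?I \<pi> {0..t} i) + (\<Sum>i\<in>K. ?I \<pi> {0..t} i)"
    using KS fin by (rule sum.subset_diff)
  also have "(\<Sum>i\<in>K. ?I \<pi> {0..t} i) = (\<Sum>i\<in>K. ?I \<pi> A i) + (\<Sum>i\<in>K. ?I \<pi> B i)"
    using KS split[OF q] by (simp add: sum.distrib subset_iff)
  also have "(\<Sum>i\<in>K. ?I \<pi> B i) \<le> (\<Sum>i\<in>S. ?I \<pi> B i)"
    using fin KS Bnn by (intro sum_mono2) auto
  also have "(\<Sum>i\<in>S. ?I \<pi> B i) = (LINT x:B|lborel. (\<Sum>i\<in>S. \<pi> i x))"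
    by (intro set_integral_sum_fin(2)[symmetric] intB[OF q])
  also have "\<dots> \<le> (LINT x:B|lborel. (\<Sum>i\<in>S. r i x))" by (rule e)
  also have "\<dots> = (\<Sum>i\<in>S. ?I r B i)"
    by (intro set_integral_sum_fin(2) intB[OF p])
  also have "\<dots> = (\<Sum>i\<in>S-K. ?I r B i) + (\<Sum>i\<in>K. ?I r B i)"
    using KS fin by (rule sum.subset_diff)
  also have "(\<Sum>i\<in>S-K. ?I r B i) = 0" using d by simp
  finally have 1: "(\<Sum>i\<in>S. ?I \<pi> {0..t} i) \<le> (\<Sum>i\<in>S-K. ?I \<pi> {0..t} i) + ((\<Sum>i\<in>K. ?I \<pi> A i) + (\<Sum>i\<in>K. ?I r B i))"
    by simp
  have 2: "(\<Sum>i\<in>S-K. ?I \<pi> {0..t} i) \<le> (\<Sum>i\<in>S-K. ?I r {0..t} i)" using c by (rule sum_mono)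
  have 3: "(\<Sum>i\<in>K. ?I \<pi> A i) \<le> (\<Sum>i\<in>K. ?I r A i)" using b by (rule sum_mono)
  have 4: "(\<Sum>i\<in>K. ?I r {0..t} i) = (\<Sum>i\<in>K. ?I r A i) + (\<Sum>i\<in>K. ?I r B i)"
    using KS split[OF p] by (simp add: sum.distrib subset_iff)
  have 5: "(\<Sum>i\<in>S. ?I r {0..t} i) = (\<Sum>i\<in>S-K. ?I r {0..t} i) + (\<Sum>i\<in>K. ?I r {0..t} i)"
    using KS fin by (rule sum.subset_diff)
  have "(\<Sum>i\<in>S. ?I \<pi> {0..t} i) \<le> (\<Sum>i\<in>S. ?I r {0..t} i)" using 1 2 3 4 5 by linarith
  then show ?thesis unfolding en by (simp add: sum_subtractf)
qed



lemma pw_ind: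
  assumes p: "is_policy S Ebar P E0 d f" and S: "S \<noteq> {}"
  shows "ennreal (max (d t - (\<Sum>i\<in>S. f i t)) 0) * indicator {0..b} t
       = ennreal (indicator {0..b} t * (d t - (\<Sum>i\<in>S. f i t)))"
proof (cases "t \<in> {0..b}")
  case True
  then obtain i where "i \<in> S" using S by blast
  then have "(\<Sum>i\<in>S. f i t) \<le> d t" using pol_pt(5)[OF p _] True by auto
  then show ?thesis using True by (simp add: max_def)
next
  case False then show ?thesis by simp
qed

lemma int_ind:
  assumes p: "is_policy S Ebar P E0 d f" and dI: "\<forall>b. set_integrable lborel {0..b} d"
  shows "integrable lborel (\<lambda>t. indicator {0..b} t * (d t - (\<Sum>i\<in>S. f i t)))"
proof -
  have "set_integrable lborel {0..b} (\<lambda>t. d t - (\<Sum>i\<in>S. f i t))"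
    using dI by (intro set_integral_diff(1) set_integral_sum_fin(1) pol_int[OF p]) auto
  then show ?thesis unfolding set_integrable_def by simp
qed

lemma nn_fin:
  assumes p: "is_policy S Ebar P E0 d f" and dI: "\<forall>b. set_integrable lborel {0..b} d"
    and S: "S \<noteq> {}"
  shows "(\<integral>\<^sup>+ t. ennreal (max (d t - (\<Sum>i\<in>S. f i t)) 0) * indicator {0..b} t \<partial>lborel)
     = ennreal ((LINT t:{0..b}|lborel. d t) - (\<Sum>i\<in>S. LINT t:{0..b}|lborel. f i t))"
proof -
  have "(\<integral>\<^sup>+ t. ennreal (max (d t - (\<Sum>i\<in>S. f i t)) 0) * indicator {0..b} t \<partial>lborel)
      = (\<integral>\<^sup>+ t. ennreal (indicator {0..b} t * (d t - (\<Sum>i\<in>S. f i t))) \<partial>lborel)"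
    using pw_ind[OF p S] by simp
  also have "\<dots> = ennreal (LINT t:{0..b}|lborel. d t - (\<Sum>i\<in>S. f i t))"
    unfolding set_lebesgue_integral_def
  proof (subst nn_integral_eq_integral[OF int_ind[OF p dI]])
    show "AE t in lborel. 0 \<le> indicator {0..b} t * (d t - (\<Sum>i\<in>S. f i t))"
    proof (intro AE_I2)
      fix t show "0 \<le> indicator {0..b} t * (d t - (\<Sum>i\<in>S. f i t))"
      proof (cases "t \<in> {0..b}")
        case True
        then obtain i where "i \<in> S" using S by blast
        then have "(\<Sum>i\<in>S. f i t) \<le> d t" using pol_pt(5)[OF p _] True by auto
        then show ?thesis using True by simp
      qed simp
    qed
  qed simp
  also have "(LINT t:{0..b}|lborel. d t - (\<Sum>i\<in>S. f i t))
      = (LINT t:{0..b}|lborel. d t) - (\<Sum>i\<in>S. LINT t:{0..b}|lborel. f i t)"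
  proof -
    have I: "set_integrable lborel {0..b} (f i)" if "i \<in> S" for i using that by (intro pol_int[OF p]) auto
    have "(LINT t:{0..b}|lborel. d t - (\<Sum>i\<in>S. f i t))
      = (LINT t:{0..b}|lborel. d t) - (LINT t:{0..b}|lborel. (\<Sum>i\<in>S. f i t))"
      using dI by (intro set_integral_diff(2) set_integral_sum_fin(1) I) auto
    also have "(LINT t:{0..b}|lborel. (\<Sum>i\<in>S. f i t)) = (\<Sum>i\<in>S. LINT t:{0..b}|lborel. f i t)"
      by (intro set_integral_sum_fin(2) I)
    finally show ?thesis .
  qed
  finally show ?thesis .
qed

lemma cmp_fin:
  assumes fin: "finite S" and Ppos: "\<forall>i\<in>S. 0 < P i" and dpos: "\<forall>t\<ge>0. 0 \<le> d t"
    and dI: "\<forall>b. set_integrable lborel {0..b} d"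
    and p: "is_policy S Ebar P E0 d r" and g: "ggddf S P E0 d r"
    and q: "is_policy S Ebar P E0 d \<pi>" and S: "S \<noteq> {}" and b: "0 \<le> b"
  shows "(\<integral>\<^sup>+ t. ennreal (max (d t - (\<Sum>i\<in>S. r i t)) 0) * indicator {0..b} t \<partial>lborel)
      \<le> (\<integral>\<^sup>+ t. ennreal (max (d t - (\<Sum>i\<in>S. \<pi> i t)) 0) * indicator {0..b} t \<partial>lborel)"
proof -
  have "(\<Sum>i\<in>S. energy E0 r i b) \<le> (\<Sum>i\<in>S. energy E0 \<pi> i b)"
    by (rule main_energy[OF fin Ppos dpos p g q b])
  hence "(\<Sum>i\<in>S. LINT t:{0..b}|lborel. \<pi> i t) \<le> (\<Sum>i\<in>S. LINT t:{0..b}|lborel. r i t)"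
    unfolding energy_def by (simp add: sum_subtractf)
  then show ?thesis unfolding nn_fin[OF p dI S] nn_fin[OF q dI S]
    by (intro ennreal_leI) simp
qed

lemma nn_sup:
  assumes p: "is_policy S Ebar P E0 d f" and dI: "\<forall>b. set_integrable lborel {0..b} d"
    and S: "S \<noteq> {}"
  shows "(\<integral>\<^sup>+ t. ennreal (max (d t - (\<Sum>i\<in>S. f i t)) 0) * indicator {0..} t \<partial>lborel)
    = (SUP n::nat. \<integral>\<^sup>+ t. ennreal (max (d t - (\<Sum>i\<in>S. f i t)) 0) * indicator {0..real n} t \<partial>lborel)"
proof -
  define G where "G t = ennreal (max (d t - (\<Sum>i\<in>S. f i t)) 0)" for t
  have sup: "(SUP n::nat. G t * indicator {0..real n} t) = G t * indicator {0..} t" for t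
  proof (cases "0 \<le> t")
    case True
    obtain n :: nat where n: "t \<le> real n" using real_arch_simple by blast
    show ?thesis
    proof (rule antisym)
      show "(SUP n::nat. G t * indicator {0..real n} t) \<le> G t * indicator {0..} t"
        using True by (intro SUP_least) (auto simp: indicator_def)
      have "G t * indicator {0..} t = G t * indicator {0..real n} t" using True n by simp
      also have "\<dots> \<le> (SUP n::nat. G t * indicator {0..real n} t)" by (rule SUP_upper) simp
      finally show "G t * indicator {0..} t \<le> (SUP n::nat. G t * indicator {0..real n} t)" .
    qed
  next
    case False then show ?thesis by simp
  qed
  have inc: "incseq (\<lambda>n::nat. \<lambda>t. G t * indicator {0..real n} t)"
    unfolding incseq_def
    by (auto intro!: le_funI mult_left_mono simp: indicator_def)
  have meas: "(\<lambda>t. G t * indicator {0..real n} t) \<in> borel_measurable lborel" for n :: nat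
  proof -
    have "(\<lambda>t. indicator {0..real n} t * (d t - (\<Sum>i\<in>S. f i t))) \<in> borel_measurable lborel"
      using int_ind[OF p dI] by (rule borel_measurable_integrable)
    hence "(\<lambda>t. ennreal (indicator {0..real n} t * (d t - (\<Sum>i\<in>S. f i t)))) \<in> borel_measurable lborel"
      by measurable
    then show ?thesis unfolding G_def pw_ind[OF p S] .
  qed
  have "(\<integral>\<^sup>+ t. G t * indicator {0..} t \<partial>lborel) = (\<integral>\<^sup>+ t. (SUP n::nat. G t * indicator {0..real n} t) \<partial>lborel)"
    by (simp add: sup)
  also have "\<dots> = (SUP n::nat. \<integral>\<^sup>+ t. G t * indicator {0..real n} t \<partial>lborel)"
    using inc meas by (rule nn_integral_monotone_convergence_SUP)
  finally show ?thesis unfolding G_def .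
qed


lemma unserved_cmp:
  assumes fin: "finite S" and Ppos: "\<forall>i\<in>S. 0 < P i" and dpos: "\<forall>t\<ge>0. 0 \<le> d t"
    and dI: "\<forall>b. set_integrable lborel {0..b} d"
    and p: "is_policy S Ebar P E0 d r" and g: "ggddf S P E0 d r"
    and q: "is_policy S Ebar P E0 d \<pi>" and T: "0 < T"
  shows "unserved S d r T \<le> unserved S d \<pi> T"
proof (cases "S = {}")
  case True then show ?thesis unfolding unserved_def by simp
next
  case S: False
  show ?thesis
  proof (cases T)
    case (real T0)
    have T0: "0 \<le> T0" using T real by simp
    have "{t. 0 \<le> t \<and> ereal t \<le> T} = {0..T0}" using real by auto
    then show ?thesis unfolding unserved_def
      using cmp_fin[OF fin Ppos dpos dI p g q S T0] by simp
  next
    case PInf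
    have set: "{t. 0 \<le> t \<and> ereal t \<le> T} = {0..}" using PInf by auto
    show ?thesis unfolding unserved_def set nn_sup[OF p dI S] nn_sup[OF q dI S]
    proof (rule SUP_mono)
      fix n :: nat
      show "\<exists>m\<in>UNIV. (\<integral>\<^sup>+ t. ennreal (max (d t - (\<Sum>i\<in>S. r i t)) 0) * indicator {0..real n} t \<partial>lborel)
          \<le> (\<integral>\<^sup>+ t. ennreal (max (d t - (\<Sum>i\<in>S. \<pi> i t)) 0) * indicator {0..real m} t \<partial>lborel)"
        using cmp_fin[OF fin Ppos dpos dI p g q S, of "real n"] by auto
    qed
  next
    case MInf then show ?thesis using T by simp
  qed
qed

theorem corollary2:
  fixes S :: "'s set" and Ebar P E0 :: "'s \<Rightarrow> real" and M :: "'w measure"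
    and D :: "'w \<Rightarrow> real \<Rightarrow> real" and T :: ereal
    and rG :: "'w \<Rightarrow> 's \<Rightarrow> real \<Rightarrow> real"
  assumes "finite S"
    and "\<forall>i\<in>S. 0 < Ebar i" and "\<forall>i\<in>S. 0 < P i"
    and "prob_space M"
    and "\<forall>\<omega>\<in>space M. \<forall>t\<ge>0. 0 \<le> D \<omega> t"
    and "\<forall>\<omega>\<in>space M. \<forall>b. set_integrable lborel {0..b} (D \<omega>)"
    and "0 < T"
    and "\<forall>\<omega>\<in>space M. is_policy S Ebar P E0 (D \<omega>) (rG \<omega>) \<and> ggddf S P E0 (D \<omega>) (rG \<omega>)"
  shows "(\<exists>F. \<forall>\<omega>\<in>space M. AE t in lborel. 0 \<le> t \<longrightarrow>
            (\<forall>i\<in>S. rG \<omega> i t = F (D \<omega> t) (\<lambda>j. energy E0 (rG \<omega>) j t) i))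
    \<and> (\<forall>\<pi>. (\<forall>\<omega>\<in>space M. is_policy S Ebar P E0 (D \<omega>) (\<pi> \<omega>)) \<and> nonanticipatory M D \<pi> S \<longrightarrow>
          (AE \<omega> in M. unserved S (D \<omega>) (rG \<omega>) T \<le> unserved S (D \<omega>) (\<pi> \<omega>) T)
        \<and> (\<integral>\<^sup>+\<omega>. unserved S (D \<omega>) (rG \<omega>) T \<partial>M) \<le> (\<integral>\<^sup>+\<omega>. unserved S (D \<omega>) (\<pi> \<omega>) T \<partial>M)
        \<and> (\<forall>q. 0 < q \<and> q < 1 \<longrightarrow>
              (\<lambda>\<omega>. unserved S (D \<omega>) (rG \<omega>) T) \<in> borel_measurable M \<longrightarrow>
              (\<lambda>\<omega>. unserved S (D \<omega>) (\<pi> \<omega>) T) \<in> borel_measurable M \<longrightarrow>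
              quantile M (\<lambda>\<omega>. unserved S (D \<omega>) (rG \<omega>) T) q
                \<le> quantile M (\<lambda>\<omega>. unserved S (D \<omega>) (\<pi> \<omega>) T) q))"
  proof -
  note A = assms
  define F where "F x e = (SOME \<rho>. ggddf_rates S P x e \<rho>)" for x e
  have part1: "\<forall>\<omega>\<in>space M. AE t in lborel. 0 \<le> t \<longrightarrow>
            (\<forall>i\<in>S. rG \<omega> i t = F (D \<omega> t) (\<lambda>j. energy E0 (rG \<omega>) j t) i)"
  proof
    fix \<omega> assume w: "\<omega> \<in> space M"
    have "ggddf S P E0 (D \<omega>) (rG \<omega>)" using A(8) w by blast
    then show "AE t in lborel. 0 \<le> t \<longrightarrow>
            (\<forall>i\<in>S. rG \<omega> i t = F (D \<omega> t) (\<lambda>j. energy E0 (rG \<omega>) j t) i)"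
      unfolding ggddf_def
    proof (rule AE_mp, intro AE_I2 impI ballI)
      fix t i assume H: "0 \<le> t \<longrightarrow> ggddf_rates S P (D \<omega> t) (\<lambda>j. energy E0 (rG \<omega>) j t) (\<lambda>j. rG \<omega> j t)"
        and t: "0 \<le> t" and i: "i \<in> S"
      have H1: "ggddf_rates S P (D \<omega> t) (\<lambda>j. energy E0 (rG \<omega>) j t) (\<lambda>j. rG \<omega> j t)" using H t by blast
      hence H2: "ggddf_rates S P (D \<omega> t) (\<lambda>j. energy E0 (rG \<omega>) j t) (F (D \<omega> t) (\<lambda>j. energy E0 (rG \<omega>) j t))"
        unfolding F_def by (metis someI)
      show "rG \<omega> i t = F (D \<omega> t) (\<lambda>j. energy E0 (rG \<omega>) j t) i"
        using gg_unique[OF H1 H2 A(1) A(3) i] .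
    qed
  qed
  have part2: "(AE \<omega> in M. unserved S (D \<omega>) (rG \<omega>) T \<le> unserved S (D \<omega>) (\<pi> \<omega>) T)
        \<and> (\<integral>\<^sup>+\<omega>. unserved S (D \<omega>) (rG \<omega>) T \<partial>M) \<le> (\<integral>\<^sup>+\<omega>. unserved S (D \<omega>) (\<pi> \<omega>) T \<partial>M)
        \<and> (\<forall>q. 0 < q \<and> q < 1 \<longrightarrow>
              (\<lambda>\<omega>. unserved S (D \<omega>) (rG \<omega>) T) \<in> borel_measurable M \<longrightarrow>
              (\<lambda>\<omega>. unserved S (D \<omega>) (\<pi> \<omega>) T) \<in> borel_measurable M \<longrightarrow>
              quantile M (\<lambda>\<omega>. unserved S (D \<omega>) (rG \<omega>) T) q
                \<le> quantile M (\<lambda>\<omega>. unserved S (D \<omega>) (\<pi> \<omega>) T) q)"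
    if pi: "\<forall>\<omega>\<in>space M. is_policy S Ebar P E0 (D \<omega>) (\<pi> \<omega>)" for \<pi>
  proof -
    have pw: "unserved S (D \<omega>) (rG \<omega>) T \<le> unserved S (D \<omega>) (\<pi> \<omega>) T" if w: "\<omega> \<in> space M" for \<omega>
      using A(1,3) A(5)[rule_format, OF w] A(6)[rule_format, OF w] A(8)[rule_format, OF w] pi[rule_format, OF w] A(7)
      by (intro unserved_cmp) auto
    interpret prob_space M by (rule A(4))
    have q: "quantile M (\<lambda>\<omega>. unserved S (D \<omega>) (rG \<omega>) T) q
                \<le> quantile M (\<lambda>\<omega>. unserved S (D \<omega>) (\<pi> \<omega>) T) q"
      if m1: "(\<lambda>\<omega>. unserved S (D \<omega>) (rG \<omega>) T) \<in> borel_measurable M"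
        and m2: "(\<lambda>\<omega>. unserved S (D \<omega>) (\<pi> \<omega>) T) \<in> borel_measurable M" for q
      unfolding quantile_def
    proof (rule Inf_superset_mono, safe)
      fix x assume x: "q \<le> measure M {\<omega> \<in> space M. unserved S (D \<omega>) (\<pi> \<omega>) T \<le> x}"
      have "{\<omega> \<in> space M. unserved S (D \<omega>) (\<pi> \<omega>) T \<le> x} \<subseteq> {\<omega> \<in> space M. unserved S (D \<omega>) (rG \<omega>) T \<le> x}"
        using pw order.trans by blast
      moreover have "{\<omega> \<in> space M. unserved S (D \<omega>) (rG \<omega>) T \<le> x} \<in> sets M"
        using m1 by measurable
      ultimately have "measure M {\<omega> \<in> space M. unserved S (D \<omega>) (\<pi> \<omega>) T \<le> x}
          \<le> measure M {\<omega> \<in> space M. unserved S (D \<omega>) (rG \<omega>) T \<le> x}"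
        by (rule finite_measure_mono)
      then show "q \<le> measure M {\<omega> \<in> space M. unserved S (D \<omega>) (rG \<omega>) T \<le> x}" using x by simp
    qed
    show ?thesis using pw q by (auto intro!: AE_I2 nn_integral_mono)
  qed
  show ?thesis using part1 part2 by blast
qed

end
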